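(* Let $K$ be a field, $I\subset R=K[x_1,\ldots,x_n]$ a monomial ideal and $h$ a monomial in $R$. Then $I$ has the copersistence property if and only if $hI$ has the copersistence property.
   Context: An ideal $I$ in a commutative Noetherian ring $R$ has the copersistence property if $\mathrm{Ass}_R(R/I^k)\supseteq\mathrm{Ass}_R(R/I^{k+1})$ for all $k\ge1$. *)

theory Defs
  imports Main "HOL-Library.Poly_Mapping"
begin

text \<open>Polynomial ring K[x_v : v in 'v] with finitely many variables ('v finite):
  polynomials are finitely supported maps from exponent vectors to coefficients.\<close>
type_synonym ('v, 'k) mpoly = "('v \<Rightarrow>\<^sub>0 nat) \<Rightarrow>\<^sub>0 'k"

definition is_ideal :: "'a::comm_ring_1 set \<Rightarrow> bool" where
  "is_ideal I \<longleftrightarrow> 0 \<in> I \<and> (\<forall>a\<in>I. \<forall>b\<in>I. a + b \<in> I) \<and> (\<forall>r. \<forall>a\<in>I. r * a \<in> I)"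

definition ideal_gen :: "'a::comm_ring_1 set \<Rightarrow> 'a set" where
  "ideal_gen S = \<Inter> {J. is_ideal J \<and> S \<subseteq> J}"

definition prime_ideal :: "'a::comm_ring_1 set \<Rightarrow> bool" where
  "prime_ideal P \<longleftrightarrow> is_ideal P \<and> P \<noteq> UNIV \<and> (\<forall>a b. a * b \<in> P \<longrightarrow> a \<in> P \<or> b \<in> P)"

definition ideal_prod :: "'a::comm_ring_1 set \<Rightarrow> 'a set \<Rightarrow> 'a set" where
  "ideal_prod I J = ideal_gen {a * b | a b. a \<in> I \<and> b \<in> J}"

primrec ideal_pow :: "'a::comm_ring_1 set \<Rightarrow> nat \<Rightarrow> 'a set" where
  "ideal_pow I 0 = UNIV"
| "ideal_pow I (Suc k) = ideal_prod I (ideal_pow I k)"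

text \<open>Ass_R(R/I): primes of the form (I : f) = Ann_R(f + I).\<close>
definition Ass_quot :: "'a::comm_ring_1 set \<Rightarrow> 'a set set" where
  "Ass_quot I = {P. prime_ideal P \<and> (\<exists>f. P = {g. g * f \<in> I})}"

definition copersistence :: "'a::comm_ring_1 set \<Rightarrow> bool" where
  "copersistence I \<longleftrightarrow> (\<forall>k\<ge>1. Ass_quot (ideal_pow I (Suc k)) \<subseteq> Ass_quot (ideal_pow I k))"

definition monomial_of :: "('v \<Rightarrow>\<^sub>0 nat) \<Rightarrow> ('v, 'k::comm_ring_1) mpoly" where
  "monomial_of a = Poly_Mapping.single a 1"

definition is_monomial :: "('v, 'k::comm_ring_1) mpoly \<Rightarrow> bool" where
  "is_monomial h \<longleftrightarrow> (\<exists>a. h = monomial_of a)"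

definition monomial_ideal :: "('v, 'k::comm_ring_1) mpoly set \<Rightarrow> bool" where
  "monomial_ideal I \<longleftrightarrow> (\<exists>S. S \<subseteq> {m. is_monomial m} \<and> I = ideal_gen S)"

text \<open>hI as the ideal generated by h times elements of I (equals the set {h*f | f in I}).\<close>
definition elt_times_ideal :: "'a::comm_ring_1 \<Rightarrow> 'a set \<Rightarrow> 'a set" where
  "elt_times_ideal h I = ideal_gen {h * f | f. f \<in> I}"

end

theory Submission
  imports Defs
begin

definition vlist :: "'v::finite list" where
  "vlist = (SOME xs. set xs = UNIV)"

lemma set_vlist: "set (vlist :: 'v::finite list) = UNIV"
proof -
  have "\<exists>xs::'v list. set xs = UNIV" using finite_list[of "UNIV::'v set"] by simp
  then show ?thesis unfolding vlist_def by (rule someI_ex)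
qed

definition phi :: "'v::finite \<Rightarrow> ('v \<Rightarrow>\<^sub>0 nat) \<Rightarrow> (nat \<Rightarrow>\<^sub>0 int)" where
  "phi v a = Poly_Mapping.nth ((- int (Poly_Mapping.lookup a v)) # List.map (\<lambda>w. int (Poly_Mapping.lookup a w)) vlist)"

lemma lookup_phi: fixes v :: "'v::finite" shows "Poly_Mapping.lookup (phi v a) n =
   (if n = 0 then - int (Poly_Mapping.lookup a v) else if n \<le> length (vlist::'v list) then int (Poly_Mapping.lookup a (vlist ! (n - 1))) else 0)"
  by (cases n) (simp_all add: phi_def nth_default_def)

lemma phi_add: fixes v :: "'v::finite" shows "phi v (a + b) = phi v a + phi v b"
  by (rule poly_mapping_eqI) (simp add: lookup_phi lookup_add)

lemma phi_inj: fixes v :: "'v::finite" shows "phi v a = phi v b \<Longrightarrow> a = b"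
proof (rule poly_mapping_eqI)
  fix w assume e: "phi v a = phi v b"
  have "w \<in> set (vlist::'v list)" by (simp add: set_vlist)
  then obtain i where i: "i < length (vlist::'v list)" "vlist ! i = w"
    by (auto simp: in_set_conv_nth)
  have "Poly_Mapping.lookup (phi v a) (Suc i) = Poly_Mapping.lookup (phi v b) (Suc i)" using e by simp
  then show "Poly_Mapping.lookup a w = Poly_Mapping.lookup b w" using i by (simp add: lookup_phi)
qed

lemma phi_less_v: fixes v :: "'v::finite"
  assumes "Poly_Mapping.lookup a v < Poly_Mapping.lookup b v" shows "phi v b < phi v a"
proof -
  have "less_fun (Poly_Mapping.lookup (phi v b)) (Poly_Mapping.lookup (phi v a))"
    by (rule less_funI, rule exI[of _ 0]) (simp add: lookup_phi assms)
  then show ?thesis by (simp add: less_poly_mapping.rep_eq)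
qed

lemma lookup_mult_pairs:
  "Poly_Mapping.lookup (f * g) k =
     (\<Sum>(a, b). Poly_Mapping.lookup f a * Poly_Mapping.lookup g b when k = a + b)"
  by (simp add: times_poly_mapping.rep_eq prod_fun_unfold_prod)

lemma lead_mult:
  fixes f g :: "('v::finite, 'k::field) mpoly" and v :: 'v
  assumes "f \<noteq> 0" "g \<noteq> 0"
  obtains a0 b0 where "a0 \<in> Poly_Mapping.keys f" "b0 \<in> Poly_Mapping.keys g"
    "a0 + b0 \<in> Poly_Mapping.keys (f * g)"
    "\<And>a. a \<in> Poly_Mapping.keys f \<Longrightarrow> Poly_Mapping.lookup a0 v \<le> Poly_Mapping.lookup a v"
    "\<And>b. b \<in> Poly_Mapping.keys g \<Longrightarrow> Poly_Mapping.lookup b0 v \<le> Poly_Mapping.lookup b v"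
proof -
  define A where "A = phi v ` Poly_Mapping.keys f"
  define B where "B = phi v ` Poly_Mapping.keys g"
  have fA: "finite A" "A \<noteq> {}" using assms(1) by (auto simp: A_def)
  have fB: "finite B" "B \<noteq> {}" using assms(2) by (auto simp: B_def)
  obtain a0 where a0: "a0 \<in> Poly_Mapping.keys f" "phi v a0 = Max A"
    using Max_in[OF fA] by (auto simp: A_def)
  obtain b0 where b0: "b0 \<in> Poly_Mapping.keys g" "phi v b0 = Max B"
    using Max_in[OF fB] by (auto simp: B_def)
  have amax: "phi v a \<le> phi v a0" if "a \<in> Poly_Mapping.keys f" for a
    using that a0(2) fA by (auto simp: A_def)
  have bmax: "phi v b \<le> phi v b0" if "b \<in> Poly_Mapping.keys g" for b
    using that b0(2) fB by (auto simp: B_def)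
  have key: "a = a0 \<and> b = b0" if ab: "a \<in> Poly_Mapping.keys f" "b \<in> Poly_Mapping.keys g"
     "a0 + b0 = a + b" for a b
  proof -
    have s: "phi v a0 + phi v b0 = phi v a + phi v b" using ab(3) by (metis phi_add)
    have "phi v a = phi v a0"
    proof (rule ccontr)
      assume "phi v a \<noteq> phi v a0"
      then have "phi v a < phi v a0" using amax[OF ab(1)] by simp
      then have "phi v a + phi v b < phi v a0 + phi v b0"
        using bmax[OF ab(2)] by (rule add_less_le_mono)
      then show False using s by simp
    qed
    then have "a = a0" by (rule phi_inj)
    then show ?thesis using ab(3) by simp
  qed
  let ?c = "Poly_Mapping.lookup f a0 * Poly_Mapping.lookup g b0"
  have "Poly_Mapping.lookup (f * g) (a0 + b0) =
     (\<Sum>(a, b). Poly_Mapping.lookup f a * Poly_Mapping.lookup g b when a0 + b0 = a + b)"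
    by (rule lookup_mult_pairs)
  also have "\<dots> = (\<Sum>ab. ?c when ab = (a0, b0))"
  proof (rule Sum_any.cong)
    fix ab :: "('v \<Rightarrow>\<^sub>0 nat) \<times> ('v \<Rightarrow>\<^sub>0 nat)"
    obtain a b where [simp]: "ab = (a, b)" by (cases ab)
    show "(case ab of (a, b) \<Rightarrow> Poly_Mapping.lookup f a * Poly_Mapping.lookup g b when a0 + b0 = a + b)
       = (?c when ab = (a0, b0))"
    proof (cases "a \<in> Poly_Mapping.keys f \<and> b \<in> Poly_Mapping.keys g")
      case True
      then show ?thesis using key[of a b] by (auto simp: when_def)
    next
      case False
      then show ?thesis by (auto simp: when_def in_keys_iff)
    qed
  qed
  also have "\<dots> = ?c" by simp
  finally have "a0 + b0 \<in> Poly_Mapping.keys (f * g)"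
    using a0(1) b0(1) by (simp add: in_keys_iff)
  moreover have "Poly_Mapping.lookup a0 v \<le> Poly_Mapping.lookup a v" if "a \<in> Poly_Mapping.keys f" for a
    using amax[OF that] phi_less_v[of a v a0] by (meson leD not_le_imp_less)
  moreover have "Poly_Mapping.lookup b0 v \<le> Poly_Mapping.lookup b v" if "b \<in> Poly_Mapping.keys g" for b
    using bmax[OF that] phi_less_v[of b v b0] by (meson leD not_le_imp_less)
  ultimately show ?thesis using that a0(1) b0(1) by blast
qed


abbreviation lk where "lk \<equiv> Poly_Mapping.lookup"
abbreviation ks where "ks \<equiv> Poly_Mapping.keys"

definition nu :: "'v \<Rightarrow> ('v, 'k::field) mpoly \<Rightarrow> nat" where
  "nu v f = Min ((\<lambda>b. lk b v) ` ks f)"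

lemma nu_le: "b \<in> ks f \<Longrightarrow> nu v f \<le> lk b v"
  unfolding nu_def by simp

lemma nu_ex: "f \<noteq> 0 \<Longrightarrow> \<exists>b\<in>ks f. lk b v = nu v f"
proof -
  assume "f \<noteq> 0"
  then have "ks f \<noteq> {}" by simp
  then have "nu v f \<in> (\<lambda>b. lk b v) ` ks f" unfolding nu_def by (intro Min_in) auto
  then show ?thesis by auto
qed

lemma mult_nz:
  fixes f g :: "('v::finite, 'k::field) mpoly"
  assumes "f \<noteq> 0" "g \<noteq> 0" shows "f * g \<noteq> 0"
proof -
  obtain v :: 'v where True by simp
  from lead_mult[OF assms, of v] obtain a0 b0 where "a0 + b0 \<in> ks (f * g)" by metis
  then show ?thesis by auto
qed

lemma nu_mult:
  fixes f g :: "('v::finite, 'k::field) mpoly"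
  assumes "f \<noteq> 0" "g \<noteq> 0" shows "nu v (f * g) = nu v f + nu v g"
proof -
  obtain a0 b0 where ab: "a0 \<in> ks f" "b0 \<in> ks g" "a0 + b0 \<in> ks (f * g)"
    "\<And>a. a \<in> ks f \<Longrightarrow> lk a0 v \<le> lk a v"
    "\<And>b. b \<in> ks g \<Longrightarrow> lk b0 v \<le> lk b v"
    using lead_mult[OF assms, of v] by metis
  have fa: "nu v f = lk a0 v"
    using nu_le[OF ab(1), of v] nu_ex[OF assms(1), of v] ab(4) by force
  have gb: "nu v g = lk b0 v"
    using nu_le[OF ab(2), of v] nu_ex[OF assms(2), of v] ab(5) by force
  have le: "nu v (f * g) \<le> nu v f + nu v g"
    using nu_le[OF ab(3), of v] fa gb by (simp add: lookup_add)
  obtain c where c: "c \<in> ks (f * g)" "lk c v = nu v (f * g)"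
    using nu_ex[OF mult_nz[OF assms], of v] by blast
  obtain a b where "c = a + b" "a \<in> ks f" "b \<in> ks g" using c(1) keys_mult by blast
  then have "nu v f + nu v g \<le> lk c v"
    using nu_le[of a f v] nu_le[of b g v] by (simp add: lookup_add)
  then show ?thesis using le c(2) by simp
qed

lemma lookup_X_mult:
  "lk (monomial_of a * (q :: ('v::finite, 'k::field) mpoly)) (a + c) = lk q c"
proof -
  have "lk (monomial_of a * q) (a + c) =
     (\<Sum>(a', b). lk (monomial_of a) a' * lk q b when a + c = a' + b)"
    by (rule lookup_mult_pairs)
  also have "\<dots> = (\<Sum>ab. lk q c when ab = (a, c))"
  proof (rule Sum_any.cong)
    fix ab :: "('v \<Rightarrow>\<^sub>0 nat) \<times> ('v \<Rightarrow>\<^sub>0 nat)"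
    obtain a' b where [simp]: "ab = (a', b)" by (cases ab)
    show "(case ab of (a', b) \<Rightarrow> lk (monomial_of a) a' * lk q b when a + c = a' + b) = (lk q c when ab = (a, c))"
      by (auto simp: when_def monomial_of_def lookup_single)
  qed
  also have "\<dots> = lk q c" by simp
  finally show ?thesis .
qed

lemma keys_X_mult:
  "ks (monomial_of a * (q :: ('v::finite, 'k::field) mpoly)) = (+) a ` ks q"
proof
  show "ks (monomial_of a * q) \<subseteq> (+) a ` ks q"
    using keys_mult[of "monomial_of a" q] by (auto simp: monomial_of_def)
  show "(+) a ` ks q \<subseteq> ks (monomial_of a * q)"
    by (auto simp: in_keys_iff lookup_X_mult)
qed

lemma X_cancel:
  "monomial_of a * (x :: ('v::finite, 'k::field) mpoly) = monomial_of a * y \<Longrightarrow> x = y"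
  by (rule poly_mapping_eqI) (metis lookup_X_mult)

lemma X_nz: "monomial_of a \<noteq> (0 :: ('v, 'k::field) mpoly)"
proof
  assume "monomial_of a = (0 :: ('v, 'k::field) mpoly)"
  then have "lk (monomial_of a :: ('v, 'k::field) mpoly) a = 0" by simp
  then show False by (simp add: monomial_of_def)
qed

lemma nu_X: "nu w (monomial_of a :: ('v, 'k::field) mpoly) = lk a w"
  by (simp add: nu_def monomial_of_def)

lemma X_mult_X: "monomial_of a * monomial_of b = (monomial_of (a + b) :: ('v, 'k::field) mpoly)"
  by (simp add: monomial_of_def mult_single)

lemma pm_le_add: "(\<forall>w. lk a w \<le> lk k w) \<Longrightarrow> k = a + (k - a)"
  for a k :: "'v \<Rightarrow>\<^sub>0 nat"
  by (rule poly_mapping_eqI) (simp add: lookup_add lookup_minus)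

lemma X_div:
  fixes g :: "('v::finite, 'k::field) mpoly"
  assumes "\<forall>b\<in>ks g. \<forall>w. lk a w \<le> lk b w"
  shows "\<exists>q. g = monomial_of a * q"
proof -
  have fin: "finite {c. lk g (a + c) \<noteq> 0}"
  proof (rule finite_subset)
    show "{c. lk g (a + c) \<noteq> 0} \<subseteq> (\<lambda>b. b - a) ` ks g"
    proof
      fix c assume "c \<in> {c. lk g (a + c) \<noteq> 0}"
      then have "a + c \<in> ks g" by (simp add: in_keys_iff)
      moreover have "c = (a + c) - a" by (rule add_diff_cancel_left'[symmetric])
      ultimately show "c \<in> (\<lambda>b. b - a) ` ks g" by blast
    qed
  qed simp
  define q where "q = Abs_poly_mapping (\<lambda>c. lk g (a + c))"
  have lq: "lk q c = lk g (a + c)" for c using fin by (simp add: q_def)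
  have "g = monomial_of a * q"
  proof (rule poly_mapping_eqI)
    fix k
    show "lk g k = lk (monomial_of a * q) k"
    proof (cases "k \<in> ks g")
      case True
      then have "\<forall>w. lk a w \<le> lk k w" using assms by blast
      then have k: "k = a + (k - a)" by (rule pm_le_add)
      have "lk (monomial_of a * q) (a + (k - a)) = lk q (k - a)" by (rule lookup_X_mult)
      also have "\<dots> = lk g (a + (k - a))" by (rule lq)
      finally show ?thesis using k by simp
    next
      case False
      have "k \<notin> ks (monomial_of a * q)"
      proof
        assume "k \<in> ks (monomial_of a * q)"
        then obtain c where "c \<in> ks q" "k = a + c" by (auto simp: keys_X_mult)
        then show False using False by (simp add: in_keys_iff lq)
      qed
      then show ?thesis using False by (simp add: in_keys_iff)
    qed
  qed
  then show ?thesis by blast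
qed

lemma in_range_X:
  fixes g :: "('v::finite, 'k::field) mpoly"
  shows "g \<in> range ((*) (monomial_of a)) \<longleftrightarrow> g = 0 \<or> (\<forall>w. lk a w \<le> nu w g)"
proof
  assume "g \<in> range ((*) (monomial_of a))"
  then obtain q where q: "g = monomial_of a * q" by auto
  show "g = 0 \<or> (\<forall>w. lk a w \<le> nu w g)"
  proof (cases "q = 0")
    case False
    have "nu w g = lk a w + nu w q" for w
      using q nu_mult[OF X_nz False, of w] by (simp add: nu_X)
    then show ?thesis by simp
  qed (simp add: q)
next
  assume "g = 0 \<or> (\<forall>w. lk a w \<le> nu w g)"
  then show "g \<in> range ((*) (monomial_of a))"
  proof
    assume "g = 0" then show ?thesis by (metis mult_zero_right rangeI)
  next
    assume h: "\<forall>w. lk a w \<le> nu w g"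
    have "\<forall>b\<in>ks g. \<forall>w. lk a w \<le> lk b w"
    proof (intro ballI allI)
      fix b w assume "b \<in> ks g"
      then have "nu w g \<le> lk b w" by (rule nu_le)
      then show "lk a w \<le> lk b w" using h[rule_format, of w] by linarith
    qed
    then obtain q where "g = monomial_of a * q" using X_div by blast
    then show ?thesis by simp
  qed
qed


lemma ideal_gen_ideal: "is_ideal (ideal_gen S)"
  unfolding is_ideal_def ideal_gen_def by blast

lemma ideal_gen_sub: "S \<subseteq> ideal_gen S"
  unfolding ideal_gen_def by blast

lemma ideal_gen_least: "is_ideal J \<Longrightarrow> S \<subseteq> J \<Longrightarrow> ideal_gen S \<subseteq> J"
  unfolding ideal_gen_def by blast

lemma ideal_gen_id: "is_ideal J \<Longrightarrow> ideal_gen J = J"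
  using ideal_gen_least ideal_gen_sub by blast

lemma is_ideal_UNIV: "is_ideal (UNIV :: 'a::comm_ring_1 set)"
  by (simp add: is_ideal_def)

lemma is_ideal_cmul:
  fixes c :: "'a::comm_ring_1"
  assumes "is_ideal J" shows "is_ideal ((*) c ` J)"
  unfolding is_ideal_def
proof (intro conjI ballI allI)
  show "0 \<in> (*) c ` J" using assms unfolding is_ideal_def by force
next
  fix x y assume "x \<in> (*) c ` J" "y \<in> (*) c ` J"
  then obtain a b where "a \<in> J" "b \<in> J" "x = c * a" "y = c * b" by auto
  moreover have "a + b \<in> J" using assms \<open>a \<in> J\<close> \<open>b \<in> J\<close> unfolding is_ideal_def by blast
  ultimately show "x + y \<in> (*) c ` J" by (metis distrib_left image_eqI)
next
  fix r x assume "x \<in> (*) c ` J"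
  then obtain a where "a \<in> J" "x = c * a" by auto
  moreover have "r * a \<in> J" using assms \<open>a \<in> J\<close> unfolding is_ideal_def by blast
  ultimately show "r * x \<in> (*) c ` J" by (metis mult.left_commute image_eqI)
qed

lemma ideal_gen_cmul:
  fixes c :: "'a::comm_ring_1"
  shows "ideal_gen ((*) c ` S) = (*) c ` ideal_gen S"
proof
  show "ideal_gen ((*) c ` S) \<subseteq> (*) c ` ideal_gen S"
    by (intro ideal_gen_least is_ideal_cmul ideal_gen_ideal image_mono ideal_gen_sub)
next
  define T where "T = {x. c * x \<in> ideal_gen ((*) c ` S)}"
  have G: "is_ideal (ideal_gen ((*) c ` S))" by (rule ideal_gen_ideal)
  have "is_ideal T"
    unfolding is_ideal_def T_def
  proof (intro conjI ballI allI)
    show "0 \<in> {x. c * x \<in> ideal_gen ((*) c ` S)}" using G unfolding is_ideal_def by simp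
  next
    fix a b assume "a \<in> {x. c * x \<in> ideal_gen ((*) c ` S)}" "b \<in> {x. c * x \<in> ideal_gen ((*) c ` S)}"
    then show "a + b \<in> {x. c * x \<in> ideal_gen ((*) c ` S)}"
      using G unfolding is_ideal_def by (simp add: distrib_left)
  next
    fix r a assume "a \<in> {x. c * x \<in> ideal_gen ((*) c ` S)}"
    then have "r * (c * a) \<in> ideal_gen ((*) c ` S)" using G unfolding is_ideal_def by simp
    then show "r * a \<in> {x. c * x \<in> ideal_gen ((*) c ` S)}" by (simp add: mult.left_commute)
  qed
  moreover have "S \<subseteq> T" unfolding T_def using ideal_gen_sub by blast
  ultimately have "ideal_gen S \<subseteq> T" by (rule ideal_gen_least)
  then show "(*) c ` ideal_gen S \<subseteq> ideal_gen ((*) c ` S)" unfolding T_def by blast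
qed

lemma is_ideal_pow: "is_ideal (ideal_pow I k)"
  by (cases k) (simp_all add: is_ideal_UNIV ideal_prod_def ideal_gen_ideal)

lemma elt_times_eq:
  fixes h :: "'a::comm_ring_1"
  assumes "is_ideal I" shows "elt_times_ideal h I = (*) h ` I"
proof -
  have "{h * f |f. f \<in> I} = (*) h ` I" by auto
  then show ?thesis unfolding elt_times_ideal_def
    by (simp add: ideal_gen_cmul ideal_gen_id assms)
qed

lemma pow_cmul:
  fixes h :: "'a::comm_ring_1"
  assumes "is_ideal I"
  shows "ideal_pow (elt_times_ideal h I) k = (*) (h ^ k) ` ideal_pow I k"
  unfolding elt_times_eq[OF assms]
proof (induction k)
  case 0
  then show ?case by simp
next
  case (Suc k)
  have "{a * b |a b. a \<in> (*) h ` I \<and> b \<in> (*) (h ^ k) ` ideal_pow I k}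
     = (*) (h ^ Suc k) ` {a * b |a b. a \<in> I \<and> b \<in> ideal_pow I k}"
    by (auto simp: image_iff mult_ac) (metis mult.assoc mult.left_commute)+
  then show ?case
    by (simp only: ideal_pow.simps Suc ideal_prod_def ideal_gen_cmul)
qed

lemma pow_sub:
  fixes I :: "'a::comm_ring_1 set"
  assumes "is_ideal I" shows "ideal_pow I (Suc k) \<subseteq> I"
proof -
  have "{a * b |a b. a \<in> I \<and> b \<in> ideal_pow I k} \<subseteq> I"
  proof
    fix x assume "x \<in> {a * b |a b. a \<in> I \<and> b \<in> ideal_pow I k}"
    then obtain a b where "x = b * a" "a \<in> I" by (auto simp: mult.commute)
    then show "x \<in> I" using assms unfolding is_ideal_def by blast
  qed
  then show ?thesis by (simp add: ideal_prod_def ideal_gen_least assms)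
qed

lemma pow_mem:
  fixes I :: "'a::comm_ring_1 set"
  assumes "u \<in> I" shows "u ^ k \<in> ideal_pow I k"
proof (induction k)
  case (Suc k)
  then have "u ^ Suc k \<in> {a * b |a b. a \<in> I \<and> b \<in> ideal_pow I k}" using assms by auto
  then show ?case using ideal_gen_sub[of "{a * b |a b. a \<in> I \<and> b \<in> ideal_pow I k}"]
    by (simp add: ideal_prod_def subset_iff)
qed simp

lemma prime_one: "prime_ideal P \<Longrightarrow> 1 \<notin> P"
  unfolding prime_ideal_def is_ideal_def by (metis UNIV_eq_I mult.right_neutral)

lemma prime_mult_in: "prime_ideal P \<Longrightarrow> a \<in> P \<Longrightarrow> r * a \<in> P"
  unfolding prime_ideal_def is_ideal_def by blast

lemma prime_power: "prime_ideal P \<Longrightarrow> x ^ n \<in> P \<Longrightarrow> x \<in> P"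
proof (induction n)
  case 0 then show ?case using prime_one by auto
next
  case (Suc n)
  then show ?case unfolding prime_ideal_def by auto
qed

lemma ass_sub_cmul:
  fixes c :: "'a::comm_ring_1"
  assumes inj: "\<And>x y. c * x = c * y \<Longrightarrow> x = y"
  shows "Ass_quot J \<subseteq> Ass_quot ((*) c ` J)"
proof
  fix P assume "P \<in> Ass_quot J"
  then obtain f where P: "prime_ideal P" "P = {g. g * f \<in> J}" unfolding Ass_quot_def by auto
  have "{g. g * f \<in> J} = {g. g * (c * f) \<in> (*) c ` J}"
  proof (intro Collect_cong iffI)
    fix g assume "g * f \<in> J" then show "g * (c * f) \<in> (*) c ` J"
      by (metis image_eqI mult.left_commute)
  next
    fix g assume "g * (c * f) \<in> (*) c ` J"
    then obtain j where "j \<in> J" "g * (c * f) = c * j" by auto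
    then have "c * (g * f) = c * j" by (simp add: mult.left_commute)
    then show "g * f \<in> J" using inj \<open>j \<in> J\<close> by metis
  qed
  then show "P \<in> Ass_quot ((*) c ` J)" using P unfolding Ass_quot_def by auto
qed

lemma ass_cmul_sub:
  fixes c :: "'a::comm_ring_1"
  assumes inj: "\<And>x y. c * x = c * y \<Longrightarrow> x = y"
  shows "Ass_quot ((*) c ` J) \<subseteq> Ass_quot J \<union> Ass_quot (range ((*) c))"
proof
  fix P assume "P \<in> Ass_quot ((*) c ` J)"
  then obtain f where P: "prime_ideal P" "P = {g. g * f \<in> (*) c ` J}" unfolding Ass_quot_def by auto
  show "P \<in> Ass_quot J \<union> Ass_quot (range ((*) c))"
  proof (cases "\<exists>r f'. r \<notin> P \<and> r * f = c * f'")
    case True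
    then obtain r f' where r: "r \<notin> P" "r * f = c * f'" by blast
    have "P = {g. g * f' \<in> J}"
    proof (intro set_eqI iffI)
      fix g assume "g \<in> P"
      then have "g * r \<in> P" using prime_mult_in[OF P(1), of g r] by (simp add: mult.commute)
      then obtain j where j: "j \<in> J" "g * r * f = c * j" using P(2) by auto
      have "g * r * f = g * (r * f)" by (rule mult.assoc)
      also have "\<dots> = g * (c * f')" using r(2) by simp
      also have "\<dots> = c * (g * f')" by (rule mult.left_commute)
      finally have "c * (g * f') = c * j" using j(2) by simp
      then have "g * f' = j" by (rule inj)
      then show "g \<in> {g. g * f' \<in> J}" using j(1) by simp
    next
      fix g assume "g \<in> {g. g * f' \<in> J}"
      then have gj: "g * f' \<in> J" by simp
      have "g * r * f = g * (r * f)" by (rule mult.assoc)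
      also have "\<dots> = g * (c * f')" using r(2) by simp
      also have "\<dots> = c * (g * f')" by (rule mult.left_commute)
      finally have "g * r * f \<in> (*) c ` J" using gj by simp
      then have "g * r \<in> P" using P(2) by simp
      then show "g \<in> P" using P(1) r(1) unfolding prime_ideal_def by blast
    qed
    then show ?thesis using P(1) unfolding Ass_quot_def by auto
  next
    case False
    have "P = {g. g * f \<in> range ((*) c)}"
    proof (intro set_eqI iffI)
      fix g assume "g \<in> P" then show "g \<in> {g. g * f \<in> range ((*) c)}" using P(2) by auto
    next
      fix g assume "g \<in> {g. g * f \<in> range ((*) c)}"
      then show "g \<in> P" using False by auto
    qed
    then show ?thesis using P(1) unfolding Ass_quot_def by auto
  qed
qed

lemma ass_contains:
  assumes "is_ideal J" "P \<in> Ass_quot J" shows "J \<subseteq> P"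
  using assms unfolding Ass_quot_def is_ideal_def by (auto simp: mult.commute)


section \<open>The prime ideals (x_v)\<close>

definition Pv :: "'v \<Rightarrow> ('v::finite, 'k::field) mpoly set" where
  "Pv v = range ((*) (monomial_of (Poly_Mapping.single v 1)))"

lemma Pv_iff: "g \<in> Pv v \<longleftrightarrow> g = 0 \<or> 1 \<le> nu v g"
proof -
  have "(\<forall>w. lk (Poly_Mapping.single v (1::nat)) w \<le> nu w g) \<longleftrightarrow> 1 \<le> nu v g"
  proof
    assume "\<forall>w. lk (Poly_Mapping.single v (1::nat)) w \<le> nu w g"
    then show "1 \<le> nu v g" by (metis lookup_single_eq)
  next
    assume "1 \<le> nu v g"
    then show "\<forall>w. lk (Poly_Mapping.single v (1::nat)) w \<le> nu w g"
      by (auto simp: lookup_single when_def)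
  qed
  then show ?thesis unfolding Pv_def in_range_X by simp
qed

lemma one_X: "(1 :: ('v, 'k::field) mpoly) = monomial_of 0"
  by (simp add: monomial_of_def)

lemma nu_one: "nu v (1 :: ('v::finite, 'k::field) mpoly) = 0"
  by (simp add: one_X nu_X)

lemma prime_Pv: "prime_ideal (Pv v)"
proof -
  have id: "is_ideal (Pv v)" unfolding Pv_def using is_ideal_cmul[OF is_ideal_UNIV] by simp
  have n1: "1 \<notin> Pv v" by (simp add: Pv_iff nu_one)
  have pr: "a \<in> Pv v \<or> b \<in> Pv v" if "a * b \<in> Pv v" for a b
  proof (cases "a = 0 \<or> b = 0")
    case True then show ?thesis by (auto simp: Pv_iff)
  next
    case False
    then have "a * b \<noteq> 0" by (simp add: mult_nz)
    then have "1 \<le> nu v (a * b)" using that by (simp add: Pv_iff)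
    moreover have "nu v (a * b) = nu v a + nu v b" using False by (simp add: nu_mult)
    ultimately have "1 \<le> nu v a \<or> 1 \<le> nu v b" by arith
    then show ?thesis by (auto simp: Pv_iff)
  qed
  show ?thesis unfolding prime_ideal_def using id n1 pr by blast
qed

lemma X_single_pow:
  "(monomial_of (Poly_Mapping.single v 1) :: ('v, 'k::field) mpoly) ^ n
     = monomial_of (Poly_Mapping.single v n)"
proof (induction n)
  case 0 then show ?case by (simp add: one_X)
next
  case (Suc n)
  have "Poly_Mapping.single v (Suc n) = Poly_Mapping.single v 1 + Poly_Mapping.single v n"
    by (simp add: single_add[symmetric])
  then show ?case using Suc by (simp add: X_mult_X)
qed

lemma X_pow: "\<exists>b. (monomial_of a :: ('v, 'k::field) mpoly) ^ k = monomial_of b \<and> (\<forall>w. lk b w = k * lk a w)"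
proof (induction k)
  case 0
  then show ?case by (intro exI[of _ 0]) (simp add: one_X)
next
  case (Suc k)
  then obtain b where b: "(monomial_of a :: ('v, 'k::field) mpoly) ^ k = monomial_of b"
    "\<forall>w. lk b w = k * lk a w" by blast
  show ?case
    by (intro exI[of _ "a + b"]) (simp add: b X_mult_X lookup_add)
qed

lemma ass_X:
  fixes a :: "'v::finite \<Rightarrow>\<^sub>0 nat"
  assumes "P \<in> Ass_quot (range ((*) (monomial_of a :: ('v, 'k::field) mpoly)))"
  shows "\<exists>v. 0 < lk a v \<and> P = Pv v"
proof -
  obtain f :: "('v, 'k) mpoly" where P: "prime_ideal P" "P = {g. g * f \<in> range ((*) (monomial_of a))}"
    using assms unfolding Ass_quot_def by blast
  have "1 \<notin> P" using P(1) by (rule prime_one)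
  then have nf: "f \<notin> range ((*) (monomial_of a))" using P(2) by simp
  then have f0: "f \<noteq> 0" by (metis mult_zero_right rangeI)
  from nf obtain v where v: "nu v f < lk a v" using in_range_X[of f a] f0 by (auto simp: not_le)
  have sub: "P \<subseteq> Pv v"
  proof
    fix g assume g: "g \<in> P"
    show "g \<in> Pv v"
    proof (cases "g = 0")
      case True then show ?thesis by (simp add: Pv_iff)
    next
      case False
      then have "g * f \<noteq> 0" using f0 by (simp add: mult_nz)
      moreover have "g * f \<in> range ((*) (monomial_of a))" using g P(2) by simp
      ultimately have "lk a v \<le> nu v (g * f)" using in_range_X by blast
      then have "1 \<le> nu v g" using v False f0 by (simp add: nu_mult)
      then show ?thesis by (simp add: Pv_iff)
    qed
  qed
  define c where "c = Abs_poly_mapping (\<lambda>w. lk a w - nu w f)"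
  have lc: "lk c w = lk a w - nu w f" for w unfolding c_def by simp
  have cP: "monomial_of c \<in> P"
  proof -
    have "monomial_of c * f \<noteq> 0" using f0 X_nz mult_nz by blast
    moreover have "nu w (monomial_of c * f) = lk c w + nu w f" for w
      using nu_mult[OF X_nz f0] by (simp add: nu_X)
    moreover have "lk a w \<le> lk c w + nu w f" for w unfolding lc by arith
    ultimately have "monomial_of c * f \<in> range ((*) (monomial_of a))"
      unfolding in_range_X by simp
    then show ?thesis using P(2) by simp
  qed
  define c' where "c' = c - Poly_Mapping.single v (lk c v)"
  have cc: "c = c' + Poly_Mapping.single v (lk c v)"
    by (rule poly_mapping_eqI) (auto simp: c'_def lookup_add lookup_minus lookup_single when_def)
  have lc': "lk c' v = 0" by (simp add: c'_def lookup_minus)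
  have split: "monomial_of c = (monomial_of c' :: ('v, 'k) mpoly) * monomial_of (Poly_Mapping.single v (lk c v))"
    by (subst cc) (simp add: X_mult_X)
  have "monomial_of c' \<notin> P"
  proof
    assume "monomial_of c' \<in> P"
    then have "monomial_of c' \<in> (Pv v :: ('v, 'k) mpoly set)" using sub by blast
    moreover have "(monomial_of c' :: ('v, 'k) mpoly) \<noteq> 0" by (rule X_nz)
    ultimately show False by (simp add: Pv_iff nu_X lc')
  qed
  then have "monomial_of (Poly_Mapping.single v (lk c v)) \<in> P"
    using cP P(1) split unfolding prime_ideal_def by metis
  then have "(monomial_of (Poly_Mapping.single v 1) :: ('v, 'k) mpoly) ^ (lk c v) \<in> P"
    by (simp only: X_single_pow)
  then have xv: "monomial_of (Poly_Mapping.single v 1) \<in> P" by (rule prime_power[OF P(1)])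
  have "(Pv v :: ('v, 'k) mpoly set) \<subseteq> P"
  proof
    fix g assume "g \<in> (Pv v :: ('v, 'k) mpoly set)"
    then obtain q where "g = monomial_of (Poly_Mapping.single v 1) * q" unfolding Pv_def by auto
    then show "g \<in> P" using prime_mult_in[OF P(1) xv, of q] by (simp add: mult.commute)
  qed
  then have "P = Pv v" using sub by blast
  moreover have "0 < lk a v" using v by simp
  ultimately show ?thesis by blast
qed

lemma ass_Pv:
  fixes J :: "('v::finite, 'k::field) mpoly set"
  assumes J: "is_ideal J" "J \<noteq> {0}" "J \<subseteq> Pv v"
  shows "Pv v \<in> Ass_quot J"
proof -
  have "0 \<in> J" using J(1) unfolding is_ideal_def by blast
  then obtain j0 where "j0 \<in> J" "j0 \<noteq> 0" using J(2) by blast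
  then obtain j where j: "j \<in> J \<and> j \<noteq> 0" and jmin: "\<forall>y. y \<in> J \<and> y \<noteq> 0 \<longrightarrow> nu v j \<le> nu v y"
    using ex_has_least_nat[of "\<lambda>x. x \<in> J \<and> x \<noteq> 0" j0 "nu v"] by blast
  have "j \<in> Pv v" using j J(3) by blast
  then obtain f where jf: "j = monomial_of (Poly_Mapping.single v 1) * f" unfolding Pv_def by auto
  have f0: "f \<noteq> 0" using j jf by auto
  have nj: "nu v j = 1 + nu v f" using jf nu_mult[OF X_nz f0, of v "Poly_Mapping.single v 1"] by (simp add: nu_X)
  have "Pv v = {g. g * f \<in> J}"
  proof (intro set_eqI iffI)
    fix g :: "('v, 'k) mpoly" assume "g \<in> Pv v"
    then obtain q where "g = monomial_of (Poly_Mapping.single v 1) * q" unfolding Pv_def by auto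
    then have "g * f = q * j" using jf by (simp add: mult_ac)
    then show "g \<in> {g. g * f \<in> J}" using j J(1) unfolding is_ideal_def by simp
  next
    fix g :: "('v, 'k) mpoly" assume g: "g \<in> {g. g * f \<in> J}"
    show "g \<in> Pv v"
    proof (cases "g = 0")
      case True then show ?thesis by (simp add: Pv_iff)
    next
      case False
      then have "g * f \<noteq> 0" using f0 by (simp add: mult_nz)
      then have "nu v j \<le> nu v (g * f)" using jmin g by blast
      then have "1 \<le> nu v g" using nj False f0 by (simp add: nu_mult)
      then show ?thesis by (simp add: Pv_iff)
    qed
  qed
  then show ?thesis using prime_Pv unfolding Ass_quot_def by blast
qed


lemma pow_nz:
  fixes u :: "('v::finite, 'k::field) mpoly"
  assumes "u \<noteq> 0" shows "u ^ k \<noteq> 0"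
  by (induction k) (simp_all add: assms mult_nz)

theorem proposition3p7:
  fixes I :: "('v::finite, 'k::field) mpoly set" and h :: "('v, 'k) mpoly"
  assumes "monomial_ideal I" and "is_monomial h"
  shows "copersistence I \<longleftrightarrow> copersistence (elt_times_ideal h I)"
proof -
  obtain a where h: "h = monomial_of a" using assms(2) unfolding is_monomial_def by auto
  obtain S where "I = ideal_gen S" using assms(1) unfolding monomial_ideal_def by auto
  then have idI: "is_ideal I" by (simp add: ideal_gen_ideal)
  show ?thesis
  proof (cases "I = {0}")
    case True
    then have "elt_times_ideal h I = I" using elt_times_eq[OF idI, of h] by simp
    then show ?thesis by simp
  next
    case False
    have "0 \<in> I" using idI unfolding is_ideal_def by blast
    then obtain u where u: "u \<in> I" "u \<noteq> 0" using False by blast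
    have upow: "u ^ k \<in> ideal_pow I k" "u ^ k \<noteq> 0" for k
      using pow_mem[OF u(1)] pow_nz[OF u(2)] by auto
    have B: "ideal_pow (elt_times_ideal h I) k = (*) (h ^ k) ` ideal_pow I k" for k
      by (rule pow_cmul[OF idI])
    have hk: "\<exists>b. h ^ k = monomial_of b \<and> (\<forall>w. lk b w = k * lk a w)" for k
      unfolding h by (rule X_pow)
    have inj: "x = y" if "h ^ k * x = h ^ k * y" for k x y
      using hk[of k] that X_cancel by metis
    have AB: "Ass_quot (ideal_pow I k) \<subseteq> Ass_quot (ideal_pow (elt_times_ideal h I) k)" for k
      unfolding B by (rule ass_sub_cmul) (rule inj)
    have BA: "P \<in> Ass_quot (ideal_pow I k) \<or> (\<exists>v. 0 < lk a v \<and> 0 < k \<and> P = Pv v)"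
      if P: "P \<in> Ass_quot (ideal_pow (elt_times_ideal h I) k)" for P k
    proof -
      have "P \<in> Ass_quot (ideal_pow I k) \<or> P \<in> Ass_quot (range ((*) (h ^ k)))"
        using P ass_cmul_sub[of "h ^ k" "ideal_pow I k"] inj unfolding B by blast
      moreover obtain b where b: "h ^ k = monomial_of b" "\<forall>w. lk b w = k * lk a w"
        using hk by blast
      ultimately show ?thesis using ass_X[of P b] by auto
    qed
    have PB: "Pv v \<in> Ass_quot (ideal_pow (elt_times_ideal h I) k)" if "0 < lk a v" "0 < k" for v k
    proof -
      obtain b where b: "h ^ k = monomial_of b" "\<forall>w. lk b w = k * lk a w"
        using hk by blast
      have "is_ideal ((*) (h ^ k) ` ideal_pow I k)" by (intro is_ideal_cmul is_ideal_pow)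
      moreover have "(*) (h ^ k) ` ideal_pow I k \<noteq> {0}"
      proof
        assume "(*) (h ^ k) ` ideal_pow I k = {0}"
        then have "h ^ k * u ^ k = 0" using upow(1)[of k] by blast
        then show False using upow(2)[of k] b(1) X_nz mult_nz by metis
      qed
      moreover have "(*) (h ^ k) ` ideal_pow I k \<subseteq> Pv v"
      proof
        fix x assume "x \<in> (*) (h ^ k) ` ideal_pow I k"
        then obtain j where x: "x = monomial_of b * j" using b(1) by auto
        show "x \<in> Pv v"
        proof (cases "j = 0")
          case True then show ?thesis by (simp add: x Pv_iff)
        next
          case False
          have "nu v x = lk b v + nu v j" using x nu_mult[OF X_nz False] by (simp add: nu_X)
          moreover have "0 < lk b v" using b(2) that by simp
          ultimately show ?thesis by (simp add: Pv_iff)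
        qed
      qed
      ultimately show ?thesis unfolding B by (rule ass_Pv)
    qed
    have PA: "Pv v \<in> Ass_quot (ideal_pow I k)"
      if P: "Pv v \<in> Ass_quot (ideal_pow I (Suc k))" "0 < k" for v k
    proof -
      have sub1: "ideal_pow I (Suc k) \<subseteq> Pv v" using ass_contains[OF is_ideal_pow P(1)] .
      have sub2: "I \<subseteq> Pv v"
      proof
        fix y assume "y \<in> I"
        then have "y ^ Suc k \<in> Pv v" using pow_mem sub1 by blast
        then show "y \<in> Pv v" by (rule prime_power[OF prime_Pv])
      qed
      obtain k' where k': "k = Suc k'" using P(2) by (cases k) auto
      have "ideal_pow I k \<subseteq> Pv v" using pow_sub[OF idI, of k'] sub2 k' by blast
      moreover have "ideal_pow I k \<noteq> {0}" using upow[of k] by blast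
      ultimately show ?thesis by (intro ass_Pv is_ideal_pow)
    qed
    show ?thesis unfolding copersistence_def
    proof (intro iffI allI impI subsetI)
      fix k P
      assume H: "\<forall>k\<ge>1. Ass_quot (ideal_pow I (Suc k)) \<subseteq> Ass_quot (ideal_pow I k)"
        and k: "1 \<le> k" and P: "P \<in> Ass_quot (ideal_pow (elt_times_ideal h I) (Suc k))"
      from BA[OF P] show "P \<in> Ass_quot (ideal_pow (elt_times_ideal h I) k)"
      proof
        assume "P \<in> Ass_quot (ideal_pow I (Suc k))"
        then show ?thesis using H k AB by blast
      next
        assume "\<exists>v. 0 < lk a v \<and> 0 < Suc k \<and> P = Pv v"
        then show ?thesis using PB k by auto
      qed
    next
      fix k P
      assume H: "\<forall>k\<ge>1. Ass_quot (ideal_pow (elt_times_ideal h I) (Suc k))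
                   \<subseteq> Ass_quot (ideal_pow (elt_times_ideal h I) k)"
        and k: "1 \<le> k" and P: "P \<in> Ass_quot (ideal_pow I (Suc k))"
      have "P \<in> Ass_quot (ideal_pow (elt_times_ideal h I) k)" using P AB H k by blast
      from BA[OF this] show "P \<in> Ass_quot (ideal_pow I k)"
      proof
        assume "\<exists>v. 0 < lk a v \<and> 0 < k \<and> P = Pv v"
        then show ?thesis using PA P by auto
      qed simp
    qed
  qed
qed


end
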